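(* Let $n\ge 1$ and let $F$ be a finite simple graph that contains $\widehat{G}_n$ as an induced subgraph, such that the only edge of $F$ joining a vertex of $V(G_n)$ to a vertex of $V(F)\setminus V(G_n)$ is the edge $r_n y_n$. Then for every zero forcing set $P$ of $F$: (i) $|V(G_n)\cap P|\ge t_n$; (ii) if $|V(G_n)\cap P| = t_n$, then $r_n\notin P$, and in the zero forcing process of $F$ started from $P$ (for any valid order of forcing steps) the vertex $r_n$ is never forced by a vertex of $V(G_n)$.
   Context: Zero forcing: given a graph and a set $S$ of vertices initially colored black (all others white), repeatedly apply the rule: if a black vertex $v$ has exactly one white neighbor $u$, then $u$ becomes black (we say $v$ forces $u$). $S$ is a zero forcing set if eventually every vertex becomes black. $Z(G)$ is the minimum size of a zero forcing set of $G$. Subdivided $K_4$: the complete graph on 4 vertices $a,b,c,e$ with the edge $ab$ subdivided by a new vertex $s$ (so 5 vertices, edges $as, sb, ac, ae, bc, be, ce$); $s$ is called its subdivision vertex. $B_d$ ($d\ge1$) is the complete binary tree with $2^d-1$ vertices and root $r$ (for $d=1$ a single vertex; otherwise $r$ has two children that are roots of copies of $B_{d-1}$). $G_n$ ($n\ge1$): take $B_{2n-1}$ with root $r_n$, and for every leaf $\ell$ of $B_{2n-1}$ attach a new copy of the subdivided $K_4$ by identifying $\ell$ with its subdivision vertex. (So $G_1$ is the subdivided $K_4$ with $r_1$ its subdivision vertex.) $\widehat{G}_n$ is obtained from $G_n$ by adding a new vertex $y_n$ adjacent only to $r_n$. The sequence $t_n$ is defined by $t_1=2$ and $t_{n+1}=4t_n+2$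 for $n\ge1$. *)

theory Defs
  imports Main
begin

definition simple_graph :: "'a set \<Rightarrow> ('a \<Rightarrow> 'a \<Rightarrow> bool) \<Rightarrow> bool" where
  "simple_graph V E \<longleftrightarrow> finite V \<and> (\<forall>u v. E u v \<longrightarrow> E v u) \<and> (\<forall>v. \<not> E v v)
     \<and> (\<forall>u v. E u v \<longrightarrow> u \<in> V \<and> v \<in> V)"

definition forces :: "'a set \<Rightarrow> ('a \<Rightarrow> 'a \<Rightarrow> bool) \<Rightarrow> 'a set \<Rightarrow> 'a \<Rightarrow> 'a \<Rightarrow> bool" where
  "forces V E B v u \<longleftrightarrow> v \<in> B \<and> u \<in> V \<and> u \<notin> B \<and> E v u
     \<and> (\<forall>w\<in>V. E v w \<and> w \<noteq> u \<longrightarrow> w \<in> B)"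

fun valid_forcing_seq :: "'a set \<Rightarrow> ('a \<Rightarrow> 'a \<Rightarrow> bool) \<Rightarrow> 'a set \<Rightarrow> ('a \<times> 'a) list \<Rightarrow> bool" where
  "valid_forcing_seq V E B [] = True"
| "valid_forcing_seq V E B ((v, u) # xs) =
     (forces V E B v u \<and> valid_forcing_seq V E (insert u B) xs)"

definition zf_process :: "'a set \<Rightarrow> ('a \<Rightarrow> 'a \<Rightarrow> bool) \<Rightarrow> 'a set \<Rightarrow> ('a \<times> 'a) list \<Rightarrow> bool" where
  "zf_process V E S xs \<longleftrightarrow> valid_forcing_seq V E S xs \<and> S \<union> snd ` set xs = V"

definition zero_forcing_set :: "'a set \<Rightarrow> ('a \<Rightarrow> 'a \<Rightarrow> bool) \<Rightarrow> 'a set \<Rightarrow> bool" where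
  "zero_forcing_set V E S \<longleftrightarrow> S \<subseteq> V \<and> (\<exists>xs. zf_process V E S xs)"

text \<open>Vertices of B_{2n-1}: binary strings p of length at most 2n-2 (the path from the root,
the root being the empty string; leaves have length 2n-2). For each leaf p, the attached
subdivided K4 has subdivision vertex Tr p and further vertices Kv p KA, Kv p KB, Kv p KC, Kv p KE
(the vertices a, b, c, e). Yv is the extra vertex y_n.\<close>

datatype k4v = KA | KB | KC | KE

datatype gv = Tr "bool list" | Kv "bool list" k4v | Yv

definition G_verts :: "nat \<Rightarrow> gv set" where
  "G_verts n = {Tr p | p. length p \<le> 2*n - 2} \<union> {Kv p k | p k. length p = 2*n - 2}"

definition Ghat_verts :: "nat \<Rightarrow> gv set" where
  "Ghat_verts n = insert Yv (G_verts n)"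

definition root :: gv where "root = Tr []"

definition Ghat_edge0 :: "nat \<Rightarrow> gv \<Rightarrow> gv \<Rightarrow> bool" where
  "Ghat_edge0 n u v \<longleftrightarrow>
     (\<exists>p b. length p < 2*n - 2 \<and> u = Tr p \<and> v = Tr (p @ [b]))
   \<or> (\<exists>p. length p = 2*n - 2 \<and> u = Tr p \<and> (v = Kv p KA \<or> v = Kv p KB))
   \<or> (\<exists>p x y. length p = 2*n - 2 \<and> u = Kv p x \<and> v = Kv p y \<and> x \<noteq> y \<and> {x, y} \<noteq> {KA, KB})
   \<or> (u = Yv \<and> v = Tr [])"

definition Ghat_edge :: "nat \<Rightarrow> gv \<Rightarrow> gv \<Rightarrow> bool" where
  "Ghat_edge n u v \<longleftrightarrow> Ghat_edge0 n u v \<or> Ghat_edge0 n v u"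

fun t :: "nat \<Rightarrow> nat" where
  "t 0 = 0"
| "t (Suc 0) = 2"
| "t (Suc (Suc n)) = 4 * t (Suc n) + 2"

end

theory Submission
  imports Defs
begin


lemma vstep: "valid_forcing_seq V E B xs \<Longrightarrow> (v,u) \<in> set xs \<Longrightarrow> u \<notin> B \<and> E v u \<and> u \<in> V"
proof (induction xs arbitrary: B)
  case Nil then show ?case by simp
next
  case (Cons a xs)
  obtain v' u' where a: "a = (v',u')" by fastforce
  show ?case using Cons a by (auto simp: forces_def)
qed

lemma vgrow: "valid_forcing_seq V E B xs \<Longrightarrow> v \<in> B \<Longrightarrow> (\<forall>w\<in>V. E v w \<longrightarrow> w \<in> B) \<Longrightarrow> v \<notin> fst ` set xs"
proof (induction xs arbitrary: B)
  case Nil then show ?case by simp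
next
  case (Cons a xs)
  obtain v' u' where a: "a = (v',u')" by fastforce
  show ?case using Cons(2-) Cons(1)[of "insert u' B"] a by (auto simp: forces_def)
qed

lemma dist_snd: "valid_forcing_seq V E B xs \<Longrightarrow> distinct (map snd xs)"
proof (induction xs arbitrary: B)
  case Nil then show ?case by simp
next
  case (Cons a xs)
  obtain v' u' where a: "a = (v',u')" by fastforce
  show ?case using Cons a vstep[of V E "insert u' B" xs] by force
qed

lemma dist_fst: "valid_forcing_seq V E B xs \<Longrightarrow> distinct (map fst xs)"
proof (induction xs arbitrary: B)
  case Nil then show ?case by simp
next
  case (Cons a xs)
  obtain v' u' where a: "a = (v',u')" by fastforce
  have "v' \<notin> fst ` set xs"
    using Cons(2) a by (intro vgrow[of V E "insert u' B"]) (auto simp: forces_def)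
  then show ?case using Cons a by auto
qed

lemma same_snd: "valid_forcing_seq V E B xs \<Longrightarrow> (a,u) \<in> set xs \<Longrightarrow> (b,u) \<in> set xs \<Longrightarrow> a = b"
  using dist_snd[THEN distinct_map[THEN iffD1]] by (metis conjunct2 inj_on_eq_iff prod.inject snd_conv)

lemma same_fst: "valid_forcing_seq V E B xs \<Longrightarrow> (v,a) \<in> set xs \<Longrightarrow> (v,b) \<in> set xs \<Longrightarrow> a = b"
  using dist_fst[THEN distinct_map[THEN iffD1]] by (metis conjunct2 inj_on_eq_iff prod.inject fst_conv)

lemma fort: "valid_forcing_seq V E B xs \<Longrightarrow> W \<inter> B = {} \<Longrightarrow> (\<exists>(v,u)\<in>set xs. u \<in> W) \<Longrightarrow>
  \<exists>(v,u)\<in>set xs. u \<in> W \<and> v \<notin> W \<and> E v u \<and> (\<forall>w\<in>W. w \<in> V \<longrightarrow> E v w \<longrightarrow> w = u)"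
proof (induction xs arbitrary: B)
  case Nil then show ?case by simp
next
  case (Cons a xs)
  obtain v' u' where a: "a = (v',u')" by fastforce
  show ?case
  proof (cases "u' \<in> W")
    case True
    then show ?thesis using Cons(2,3) a by (auto simp: forces_def)
  next
    case False
    then have "\<exists>(v,u)\<in>set xs. u \<in> W" using Cons(4) a by auto
    then show ?thesis using Cons(1)[of "insert u' B"] Cons(2,3) a False by auto
  qed
qed



definition sub :: "nat \<Rightarrow> bool list \<Rightarrow> gv set" where
  "sub N p = {Tr (p@s) | s. length (p@s) \<le> 2*N-2} \<union> {Kv (p@s) k | s k. length (p@s) = 2*N-2}"

lemma sub_G: "sub N p \<subseteq> G_verts N"
  unfolding sub_def G_verts_def by blast

lemma sub_nil: "sub N [] = G_verts N"
  unfolding sub_def G_verts_def by auto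

lemma Tr_in_sub: "length p \<le> 2*N-2 \<Longrightarrow> Tr p \<in> sub N p"
  unfolding sub_def by (auto intro: exI[of _ "[]"])

lemma Ghat_sym: "Ghat_edge N u v = Ghat_edge N v u"
  unfolding Ghat_edge_def by auto

lemma sub_leaf: "length p = 2*N-2 \<Longrightarrow> sub N p = {Tr p, Kv p KA, Kv p KB, Kv p KC, Kv p KE}"
  unfolding sub_def
  apply (auto intro: exI[of _ "[]"])
  using k4v.exhaust by blast

lemma sub_ext: "Tr (q@s) \<in> sub N q \<longleftrightarrow> length (q@s) \<le> 2*N-2"
  "Kv (q@s) k \<in> sub N q \<longleftrightarrow> length (q@s) = 2*N-2"
  unfolding sub_def by auto

lemma sub_ext2: "Tr (p @ b1 # b2 # s) \<in> sub N (p@[b1,b2]) \<longleftrightarrow> length (p @ b1 # b2 # s) \<le> 2*N-2"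
  "Kv (p @ b1 # b2 # s) k \<in> sub N (p@[b1,b2]) \<longleftrightarrow> length (p @ b1 # b2 # s) = 2*N-2"
  using sub_ext(1)[of "p@[b1,b2]" s N] sub_ext(2)[of "p@[b1,b2]" s k N] by auto

lemma sub_step: "length p + 2 \<le> 2*N-2 \<Longrightarrow> sub N p = {Tr p, Tr (p@[True]), Tr (p@[False])} \<union>
   (sub N (p@[True,True]) \<union> sub N (p@[True,False])) \<union> (sub N (p@[False,True]) \<union> sub N (p@[False,False]))"
proof (intro equalityI subsetI)
  fix x assume x: "x \<in> sub N p" and l: "length p + 2 \<le> 2*N-2"
  have split: "s = [] \<or> (\<exists>b. s = [b]) \<or> (\<exists>b1 b2 s'. s = [b1,b2] @ s')" for s :: "bool list"
    by (metis append_Cons append_Nil list.exhaust)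
  have "x \<in> {Tr p, Tr (p@[True]), Tr (p@[False])} \<or> (\<exists>b1 b2. x \<in> sub N (p@[b1,b2]))"
    using x[unfolded sub_def]
  proof (elim UnE CollectE exE conjE)
    fix s assume "x = Tr (p@s)" "length (p@s) \<le> 2*N-2"
    note xs = this
    consider "s=[]" | b where "s=[b]" | b1 b2 s' where "s = [b1,b2]@s'" using split by blast
    then show ?thesis
    proof cases
      case 1 then show ?thesis using xs by simp
    next
      case (2 b) then show ?thesis using xs by (cases b) simp_all
    next
      case (3 b1 b2 s') then have "x \<in> sub N (p@[b1,b2])" using xs sub_ext2 by simp
      then show ?thesis by blast
    qed
  next
    fix s k assume "x = Kv (p@s) k" "length (p@s) = 2*N-2"
    note xs = this
    consider "s=[]" | b where "s=[b]" | b1 b2 s' where "s = [b1,b2]@s'" using split by blast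
    then show ?thesis
    proof cases
      case 1 then show ?thesis using xs l by simp
    next
      case (2 b) then show ?thesis using xs l by simp
    next
      case (3 b1 b2 s') then have "x \<in> sub N (p@[b1,b2])" using xs sub_ext2 by simp
      then show ?thesis by blast
    qed
  qed
  then show "x \<in> {Tr p, Tr (p@[True]), Tr (p@[False])} \<union>
   (sub N (p@[True,True]) \<union> sub N (p@[True,False])) \<union> (sub N (p@[False,True]) \<union> sub N (p@[False,False]))"
    by (metis (full_types) UnI1 UnI2)
next
  fix x assume x: "x \<in> {Tr p, Tr (p@[True]), Tr (p@[False])} \<union>
   (sub N (p@[True,True]) \<union> sub N (p@[True,False])) \<union> (sub N (p@[False,True]) \<union> sub N (p@[False,False]))"
    and l: "length p + 2 \<le> 2*N-2"
  show "x \<in> sub N p" using x l unfolding sub_def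
    apply (elim UnE insertE CollectE exE conjE)
    apply (auto intro: exI[of _ "[]"])
    done
qed

lemma edge_out: "Ghat_edge N (Tr q) w \<Longrightarrow> length q \<le> 2*N-2 \<Longrightarrow> q \<noteq> [] \<Longrightarrow> w \<notin> sub N q \<Longrightarrow> w = Tr (butlast q)"
  unfolding Ghat_edge_def Ghat_edge0_def sub_def
  by (auto intro: exI[of _ "[]"]) 

lemma edge_in: "Ghat_edge N (Tr p) w \<Longrightarrow> length p < 2*N-2 \<Longrightarrow> w \<in> sub N p \<Longrightarrow> \<exists>b. w = Tr (p@[b])"
  unfolding Ghat_edge_def Ghat_edge0_def sub_def
  by auto



locale zfl =
  fixes V :: "'a set" and E :: "'a \<Rightarrow> 'a \<Rightarrow> bool" and f :: "gv \<Rightarrow> 'a" and N :: nat and P :: "'a set"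
  assumes N1: "N \<ge> 1"
    and sg: "simple_graph V E"
    and inj: "inj_on f (Ghat_verts N)"
    and img: "f ` Ghat_verts N \<subseteq> V"
    and ind: "\<forall>u\<in>Ghat_verts N. \<forall>v\<in>Ghat_verts N. E (f u) (f v) \<longleftrightarrow> Ghat_edge N u v"
    and bd: "\<forall>u\<in>G_verts N. \<forall>w\<in>V - f ` G_verts N. E (f u) w \<longrightarrow> u = root \<and> w = f Yv"
begin

lemma G_hat: "G_verts N \<subseteq> Ghat_verts N" unfolding Ghat_verts_def by auto

lemma Esym: "E u v \<longleftrightarrow> E v u" using sg unfolding simple_graph_def by blast
lemma EV: "E u v \<Longrightarrow> u \<in> V \<and> v \<in> V" using sg unfolding simple_graph_def by blast
lemma finV: "finite V" using sg unfolding simple_graph_def by blast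

lemma nbr: "x \<in> G_verts N \<Longrightarrow> E (f x) v \<longleftrightarrow> (\<exists>w\<in>Ghat_verts N. v = f w \<and> Ghat_edge N x w)"
proof
  assume x: "x \<in> G_verts N" and e: "E (f x) v"
  have v: "v \<in> V" using EV e by blast
  show "\<exists>w\<in>Ghat_verts N. v = f w \<and> Ghat_edge N x w"
  proof (cases "v \<in> f ` G_verts N")
    case True
    then obtain w where w: "w \<in> G_verts N" "v = f w" by blast
    then show ?thesis using ind x e G_hat by blast
  next
    case False
    then have "x = root \<and> v = f Yv" using bd x v e by blast
    then show ?thesis unfolding Ghat_verts_def root_def Ghat_edge_def Ghat_edge0_def by auto
  qed
next
  assume x: "x \<in> G_verts N" and "\<exists>w\<in>Ghat_verts N. v = f w \<and> Ghat_edge N x w"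
  then show "E (f x) v" using ind G_hat by blast
qed

lemma nbr_sub: "x \<in> G_verts N \<Longrightarrow> w \<in> G_verts N \<Longrightarrow> E (f x) (f w) \<longleftrightarrow> Ghat_edge N x w"
  using ind G_hat by blast

lemma injG: "x \<in> G_verts N \<Longrightarrow> y \<in> G_verts N \<Longrightarrow> f x = f y \<longleftrightarrow> x = y"
  using inj G_hat by (meson inj_on_eq_iff subsetD)

lemma fV: "x \<in> G_verts N \<Longrightarrow> f x \<in> V" using img G_hat by blast

end


lemma leafG:
  assumes "length p = 2*N-2"
  shows "Ghat_edge N (Kv p KA) w \<longleftrightarrow> w \<in> {Tr p, Kv p KC, Kv p KE}"
    "Ghat_edge N (Kv p KB) w \<longleftrightarrow> w \<in> {Tr p, Kv p KC, Kv p KE}"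
    "Ghat_edge N (Kv p KC) w \<longleftrightarrow> w \<in> {Kv p KA, Kv p KB, Kv p KE}"
    "Ghat_edge N (Kv p KE) w \<longleftrightarrow> w \<in> {Kv p KA, Kv p KB, Kv p KC}"
    "Ghat_edge N (Tr p) (Kv p k) \<longleftrightarrow> k = KA \<or> k = KB"
    "\<not> Ghat_edge N (Tr p) (Tr p)"
  using assms unfolding Ghat_edge_def Ghat_edge0_def
  by (auto simp: doubleton_eq_iff; metis k4v.exhaust)+



context zfl begin

definition claim :: "nat \<Rightarrow> bool list \<Rightarrow> ('a \<times> 'a) list \<Rightarrow> bool" where
  "claim m p xs \<longleftrightarrow> t m \<le> card (f`sub N p \<inter> P) \<and> (card (f`sub N p \<inter> P) = t m \<longrightarrow>
     f (Tr p) \<notin> P \<and> (\<forall>(v,u)\<in>set xs. u = f (Tr p) \<longrightarrow> v \<notin> f`sub N p))"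

lemma forced: "zf_process V E P xs \<Longrightarrow> x \<in> V \<Longrightarrow> x \<notin> P \<Longrightarrow> \<exists>v. (v,x) \<in> set xs"
  unfolding zf_process_def by force

lemma base_case:
  assumes l: "length p = 2*N-2" and zf: "zf_process V E P xs"
  shows "claim 1 p xs"
proof -
  define s a b c e where "s = f (Tr p)" and "a = f (Kv p KA)" and "b = f (Kv p KB)"
    and "c = f (Kv p KC)" and "e = f (Kv p KE)"
  have inG: "Tr p \<in> G_verts N" "\<And>k. Kv p k \<in> G_verts N" using l unfolding G_verts_def by auto
  have inH: "Tr p \<in> Ghat_verts N" "\<And>k. Kv p k \<in> Ghat_verts N" using inG G_hat by auto
  have dist: "s \<noteq> a" "s \<noteq> b" "s \<noteq> c" "s \<noteq> e" "a \<noteq> b" "a \<noteq> c" "a \<noteq> e" "b \<noteq> c" "b \<noteq> e" "c \<noteq> e"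
    unfolding s_def a_def b_def c_def e_def using injG inG by auto
  have VV: "s \<in> V" "a \<in> V" "b \<in> V" "c \<in> V" "e \<in> V"
    unfolding s_def a_def b_def c_def e_def using fV inG by auto
  have img: "f`sub N p = {s,a,b,c,e}" unfolding s_def a_def b_def c_def e_def by (simp add: sub_leaf[OF l])
  have Ea: "E v a \<longleftrightarrow> v \<in> {s,c,e}" for v
    unfolding Esym[of v] a_def s_def c_def e_def nbr[OF inG(2)] leafG[OF l] using inH by auto
  have Eb: "E v b \<longleftrightarrow> v \<in> {s,c,e}" for v
    unfolding Esym[of v] b_def s_def c_def e_def nbr[OF inG(2)] leafG[OF l] using inH by auto
  have Ec: "E v c \<longleftrightarrow> v \<in> {a,b,e}" for v
    unfolding Esym[of v] b_def a_def c_def e_def nbr[OF inG(2)] leafG[OF l] using inH by auto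
  have Ee: "E v e \<longleftrightarrow> v \<in> {a,b,c}" for v
    unfolding Esym[of v] b_def a_def c_def e_def nbr[OF inG(2)] leafG[OF l] using inH by auto
  have valid: "valid_forcing_seq V E P xs" using zf unfolding zf_process_def by blast
  have AB: "a \<in> P \<or> b \<in> P"
  proof (rule ccontr)
    assume "\<not> (a \<in> P \<or> b \<in> P)"
    then have W: "{a,b} \<inter> P = {}" by auto
    obtain v0 where "(v0,a) \<in> set xs" using forced[OF zf VV(2)] W by blast
    then have "\<exists>(v,u)\<in>set xs. u \<in> {a,b}" by blast
    from fort[OF valid W this] obtain v u where "(v,u)\<in>set xs" "u \<in> {a,b}" "v \<notin> {a,b}" "E v u"
      "\<forall>w\<in>{a,b}. w\<in>V \<longrightarrow> E v w \<longrightarrow> w = u" by blast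
    then show False using Ea Eb dist VV by auto
  qed
  have CE: "c \<in> P \<or> e \<in> P"
  proof (rule ccontr)
    assume "\<not> (c \<in> P \<or> e \<in> P)"
    then have W: "{c,e} \<inter> P = {}" by auto
    obtain v0 where "(v0,c) \<in> set xs" using forced[OF zf VV(4)] W by blast
    then have "\<exists>(v,u)\<in>set xs. u \<in> {c,e}" by blast
    from fort[OF valid W this] obtain v u where "(v,u)\<in>set xs" "u \<in> {c,e}" "v \<notin> {c,e}" "E v u"
      "\<forall>w\<in>{c,e}. w\<in>V \<longrightarrow> E v w \<longrightarrow> w = u" by blast
    then show False using Ec Ee dist VV by auto
  qed
  have card: "card (f`sub N p \<inter> P) = (if s\<in>P then 1 else 0) + (if a\<in>P then 1 else 0) + (if b\<in>P then 1 else 0)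
     + (if c\<in>P then 1 else 0) + (if e\<in>P then 1 else 0)"
    unfolding img by (simp add: Int_insert_left card_insert_if dist)
  have t1: "t 1 = 2" by simp
  show ?thesis unfolding claim_def t1
  proof (intro conjI impI)
    show "2 \<le> card (f ` sub N p \<inter> P)" unfolding card using AB CE by auto
  next
    assume c2: "card (f ` sub N p \<inter> P) = 2"
    have sP: "s \<notin> P" using c2 AB CE unfolding card by (auto split: if_splits)
    have ex: "a \<in> P \<longleftrightarrow> b \<notin> P" "c \<in> P \<longleftrightarrow> e \<notin> P" using c2 AB CE unfolding card by (auto split: if_splits)
    then show "f (Tr p) \<notin> P" using sP s_def by simp
    define W where "W = {s,a,b,c,e} - P"
    have W: "W \<inter> P = {}" unfolding W_def by auto
    obtain v0 where "(v0,s) \<in> set xs" using forced[OF zf VV(1) sP] by blast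
    then have "\<exists>(v,u)\<in>set xs. u \<in> W" using sP unfolding W_def by blast
    from fort[OF valid W this] obtain v u where vu: "(v,u)\<in>set xs" "u \<in> W" "v \<notin> W" "E v u"
      and uniq: "\<forall>w\<in>W. w\<in>V \<longrightarrow> E v w \<longrightarrow> w = u" by blast
    have key: "u = s \<and> v \<notin> {s,a,b,c,e}"
    proof (rule ccontr)
      assume nk: "\<not> (u = s \<and> v \<notin> {s,a,b,c,e})"
      have "v \<in> {s,a,b,c,e}"
      proof (cases "u = s")
        case True then show ?thesis using nk by blast
      next
        case False
        then have "u \<in> {a,b,c,e}" using vu unfolding W_def by auto
        then show ?thesis using vu(4) Ea Eb Ec Ee by auto
      qed
      then have vP: "v \<in> P" "v \<noteq> s" using vu(3) sP unfolding W_def by auto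
      have sW: "s \<in> W" using sP unfolding W_def by auto
      have vin: "v \<in> {a,b,c,e}" using vP \<open>v \<in> {s,a,b,c,e}\<close> by auto
      have U: "x \<in> {s,a,b,c,e} \<Longrightarrow> x \<notin> P \<Longrightarrow> E v x \<Longrightarrow> x = u" for x
        using uniq VV unfolding W_def by blast
      have Es': "E a s" "E b s" "E a c" "E a e" "E b c" "E b e" "E c e" "E c a" "E c b" "E e a" "E e b" "E e c"
        using Ea Eb Ec Ee Esym[of a s] Esym[of b s] by auto
      from vin show False
      proof (elim insertE emptyE)
        assume "v = a"
        then show False using U[of s] U[of c] U[of e] sP ex dist Es'
          by (cases "c \<in> P") auto
      next
        assume "v = b"
        then show False using U[of s] U[of c] U[of e] sP ex dist Es'
          by (cases "c \<in> P") auto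
      next
        assume "v = c"
        then show False using U[of a] U[of b] U[of e] vP ex dist Es'
          by (cases "a \<in> P") auto
      next
        assume "v = e"
        then show False using U[of a] U[of b] U[of c] vP ex dist Es'
          by (cases "a \<in> P") auto
      qed
    qed
    show "\<forall>(v', u')\<in>set xs. u' = f (Tr p) \<longrightarrow> v' \<notin> f ` sub N p"
    proof (intro ballI)
      fix x assume x: "x \<in> set xs"
      obtain v' u' where x': "x = (v',u')" by fastforce
      have "u' = f (Tr p) \<Longrightarrow> v' = v" using same_snd[OF valid] vu(1) key s_def x x' by blast
      then show "case x of (v', u') \<Rightarrow> u' = f (Tr p) \<longrightarrow> v' \<notin> f ` sub N p"
        using key img x' by auto
    qed
  qed
qed

end


lemma sub_disj:
  "(b1,b2) \<noteq> (c1,c2) \<Longrightarrow> sub N (p@[b1,b2]) \<inter> sub N (p@[c1,c2]) = {}"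
  "{Tr p, Tr (p@[True]), Tr (p@[False])} \<inter> sub N (p@[b1,b2]) = {}"
  unfolding sub_def by auto

context zfl begin

lemma cardU: "A \<inter> B = {} \<Longrightarrow> A \<union> B \<subseteq> G_verts N \<Longrightarrow>
  card (f`(A\<union>B) \<inter> P) = card (f`A \<inter> P) + card (f`B \<inter> P)"
proof -
  assume d: "A \<inter> B = {}" and s: "A \<union> B \<subseteq> G_verts N"
  have eq: "f`(A\<union>B) \<inter> P = (f`A \<inter> P) \<union> (f`B \<inter> P)" by auto
  have fin: "finite (f`A \<inter> P)" "finite (f`B \<inter> P)"
    using s fV finV by (auto intro: finite_subset)
  have "(f`A \<inter> P) \<inter> (f`B \<inter> P) = {}" using d s injG by blast
  then show ?thesis unfolding eq using card_Un_disjoint fin by blast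
qed

lemma forcedc:
  assumes zf: "zf_process V E P xs" and g: "g \<noteq> []" "length g \<le> 2*N-2"
    and nP: "f (Tr g) \<notin> P" and nin: "\<forall>(v,u)\<in>set xs. u = f (Tr g) \<longrightarrow> v \<notin> f`sub N g"
  shows "(f (Tr (butlast g)), f (Tr g)) \<in> set xs"
proof -
  have inG: "Tr g \<in> G_verts N" using g unfolding G_verts_def by auto
  obtain v where v: "(v, f (Tr g)) \<in> set xs" using forced[OF zf fV[OF inG] nP] by blast
  have valid: "valid_forcing_seq V E P xs" using zf unfolding zf_process_def by blast
  have "E v (f (Tr g))" using vstep[OF valid v] by blast
  then have "E (f (Tr g)) v" using Esym by blast
  then obtain w where w: "w \<in> Ghat_verts N" "v = f w" "Ghat_edge N (Tr g) w" using nbr[OF inG] by blast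
  have "v \<notin> f`sub N g" using nin v by blast
  then have "w \<notin> sub N g" using w by blast
  then have "w = Tr (butlast g)" using edge_out[OF w(3) g(2) g(1)] by blast
  then show ?thesis using v w by simp
qed

end


context zfl begin

lemma step:
  assumes k1: "k \<ge> 1" and l: "length p + 2*Suc k = 2*N" and zf: "zf_process V E P xs"
    and IH: "\<And>q. length q + 2*k = 2*N \<Longrightarrow> claim k q xs"
  shows "claim (Suc k) p xs"
proof -
  have valid: "valid_forcing_seq V E P xs" using zf unfolding zf_process_def by blast
  have l2: "length p + 2 \<le> 2*N-2" using l k1 by simp
  define K where "K b1 b2 = card (f`sub N (p@[b1,b2]) \<inter> P)" for b1 b2
  define s where "s = f (Tr p)"
  define c where "c b = f (Tr (p@[b]))" for b
  have cl: "claim k (p@[b1,b2]) xs" for b1 b2 using IH[of "p@[b1,b2]"] l by simp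
  have Kge: "t k \<le> K b1 b2" for b1 b2 using cl[of b1 b2] unfolding claim_def K_def by blast
  have inG: "Tr p \<in> G_verts N" "Tr (p@[b]) \<in> G_verts N" "Tr (p@[b1,b2]) \<in> G_verts N" for b b1 b2
    using l2 unfolding G_verts_def by auto
  have tight: "(c b, f (Tr (p@[b,b2]))) \<in> set xs \<and> f (Tr (p@[b,b2])) \<notin> P" if "K b b2 = t k" for b b2
  proof -
    have h: "f (Tr (p@[b,b2])) \<notin> P \<and> (\<forall>(v,u)\<in>set xs. u = f (Tr (p@[b,b2])) \<longrightarrow> v \<notin> f`sub N (p@[b,b2]))"
      using cl[of b b2] that unfolding claim_def K_def by blast
    have "(f (Tr (butlast (p@[b,b2]))), f (Tr (p@[b,b2]))) \<in> set xs"
      using forcedc[OF zf _ _] h l2 by simp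
    then show ?thesis using h c_def by (simp add: butlast_append)
  qed
  have pair: "\<not> (K b True = t k \<and> K b False = t k)" for b
  proof
    assume "K b True = t k \<and> K b False = t k"
    then have "(c b, f (Tr (p@[b,True]))) \<in> set xs" "(c b, f (Tr (p@[b,False]))) \<in> set xs"
      using tight by blast+
    then have "f (Tr (p@[b,True])) = f (Tr (p@[b,False]))" using same_fst[OF valid] by blast
    then show False using injG[OF inG(3) inG(3)] by simp
  qed
  have dist: "s \<noteq> c True" "s \<noteq> c False" "c True \<noteq> c False"
    unfolding s_def c_def using injG[OF inG(1) inG(2)] injG[OF inG(2) inG(2)] by auto
  have card3: "card (f`{Tr p, Tr (p@[True]), Tr (p@[False])} \<inter> P) =
     (if s \<in> P then 1 else 0) + (if c True \<in> P then 1 else 0) + (if c False \<in> P then 1 else 0)"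
    using dist unfolding s_def c_def by (simp add: Int_insert_left card_insert_if)
  have subs: "sub N (p@[b1,b2]) \<subseteq> G_verts N" for b1 b2 using sub_G by blast
  have s3: "{Tr p, Tr (p@[True]), Tr (p@[False])} \<subseteq> G_verts N" using inG by blast
  have card: "card (f`sub N p \<inter> P) = card (f`{Tr p, Tr (p@[True]), Tr (p@[False])} \<inter> P)
      + (K True True + K True False) + (K False True + K False False)"
  proof -
    let ?A = "{Tr p, Tr (p@[True]), Tr (p@[False])}"
    let ?S = "\<lambda>b1 b2. sub N (p@[b1,b2])"
    have d: "?A \<inter> ?S b1 b2 = {}" for b1 b2 using sub_disj(2) by blast
    have dTT: "?S True True \<inter> ?S True False = {}" "?S False True \<inter> ?S False False = {}"
      "(?S True True \<union> ?S True False) \<inter> (?S False True \<union> ?S False False) = {}"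
      using sub_disj(1)[of True True True False N p] sub_disj(1)[of False True False False N p]
        sub_disj(1)[of True True False True N p] sub_disj(1)[of True True False False N p]
        sub_disj(1)[of True False False True N p] sub_disj(1)[of True False False False N p]
      by blast+
    have e2: "?A \<inter> (?S True True \<union> ?S True False) = {}"
      unfolding Int_Un_distrib using d[of True True] d[of True False] by (rule Un_empty[THEN iffD2, OF conjI])
    have e3: "?A \<inter> (?S False True \<union> ?S False False) = {}"
      unfolding Int_Un_distrib using d[of False True] d[of False False] by (rule Un_empty[THEN iffD2, OF conjI])
    have e1: "(?A \<union> (?S True True \<union> ?S True False)) \<inter> (?S False True \<union> ?S False False) = {}"
      unfolding Int_Un_distrib2[of ?A] using e3 dTT(3) by (rule Un_empty[THEN iffD2, OF conjI])
    have u1: "(?A \<union> (?S True True \<union> ?S True False)) \<union> (?S False True \<union> ?S False False) \<subseteq> G_verts N"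
      using s3 subs by blast
    have u2: "?A \<union> (?S True True \<union> ?S True False) \<subseteq> G_verts N"
      using s3 subs by blast
    have u3: "?S b True \<union> ?S b False \<subseteq> G_verts N" for b using subs by blast
    have "card (f`sub N p \<inter> P) = card (f`(?A \<union> (?S True True \<union> ?S True False)) \<inter> P)
        + card (f`(?S False True \<union> ?S False False) \<inter> P)"
      unfolding sub_step[OF l2] by (rule cardU[OF e1 u1])
    also have "card (f`(?A \<union> (?S True True \<union> ?S True False)) \<inter> P) =
       card (f`?A \<inter> P) + card (f`(?S True True \<union> ?S True False) \<inter> P)"
      by (rule cardU[OF e2 u2])
    also have "card (f`(?S True True \<union> ?S True False) \<inter> P) = K True True + K True False"
      unfolding K_def by (rule cardU[OF dTT(1) u3])
    also have "card (f`(?S False True \<union> ?S False False) \<inter> P) = K False True + K False False"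
      unfolding K_def by (rule cardU[OF dTT(2) u3])
    finally show ?thesis by simp
  qed
  obtain k' where k': "k = Suc k'" using k1 by (cases k) auto
  have tS: "t (Suc k) = 4 * t k + 2" using k' by simp
  have p1: "\<not> (K True True = t k \<and> K True False = t k)" "\<not> (K False True = t k \<and> K False False = t k)"
    using pair by blast+
  show ?thesis unfolding claim_def tS
  proof (intro conjI impI)
    show "4 * t k + 2 \<le> card (f ` sub N p \<inter> P)"
      unfolding card card3 using Kge[of True True] Kge[of True False] Kge[of False True] Kge[of False False] p1
      by auto
  next
    assume eq: "card (f ` sub N p \<inter> P) = 4 * t k + 2"
    have h1: "K True True + K True False \<ge> 2*t k + 1" using Kge[of True True] Kge[of True False] p1(1) by presburger
    have h2: "K False True + K False False \<ge> 2*t k + 1" using Kge[of False True] Kge[of False False] p1(2) by presburger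
    have A: "(if s \<in> P then 1 else 0) + (if c True \<in> P then 1 else 0) + (if c False \<in> P then 1 else 0)
       + (K True True + K True False) + (K False True + K False False) = 4 * t k + 2"
      using eq unfolding card card3 by simp
    have sP: "s \<notin> P" using A h1 h2 by (cases "s \<in> P") auto
    have e1: "K True True + K True False = 2*t k + 1" "K False True + K False False = 2*t k + 1"
      using A h1 h2 by (auto split: if_splits)
    have tb0: "K True True = t k \<or> K True False = t k" "K False True = t k \<or> K False False = t k"
      using e1 Kge[of True True] Kge[of True False] Kge[of False True] Kge[of False False] by linarith+
    have tb: "\<exists>b2. K b b2 = t k" for b using tb0 by (cases b) auto
    show "f (Tr p) \<notin> P" using sP s_def by simp
    show "\<forall>(v, u)\<in>set xs. u = f (Tr p) \<longrightarrow> v \<notin> f ` sub N p"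
    proof (intro ballI)
      fix x assume x: "x \<in> set xs"
      obtain v u where x': "x = (v,u)" by fastforce
      have "False" if u: "u = f (Tr p)" and vin: "v \<in> f`sub N p"
      proof -
        obtain w where w: "w \<in> sub N p" "v = f w" using vin by blast
        have wG: "w \<in> G_verts N" using w sub_G by blast
        have "E v u" using vstep[OF valid] x x' by blast
        then have "E (f (Tr p)) (f w)" using Esym u w by blast
        then have "Ghat_edge N (Tr p) w" using nbr_sub[OF inG(1) wG] by blast
        then obtain b where b: "w = Tr (p@[b])" using edge_in w(1) l2 by fastforce
        obtain b2 where "K b b2 = t k" using tb by blast
        then have "(c b, f (Tr (p@[b,b2]))) \<in> set xs" using tight by blast
        moreover have "(c b, s) \<in> set xs" using x x' u w b c_def s_def by simp
        ultimately have "s = f (Tr (p@[b,b2]))" using same_fst[OF valid] by blast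
        then show False using injG[OF inG(1) inG(3)] s_def by simp
      qed
      then show "case x of (v, u) \<Rightarrow> u = f (Tr p) \<longrightarrow> v \<notin> f ` sub N p" using x' by auto
    qed
  qed
qed

end


context zfl begin
lemma main: "k \<ge> 1 \<Longrightarrow> length p + 2*k = 2*N \<Longrightarrow> zf_process V E P xs \<Longrightarrow> claim k p xs"
proof (induction k arbitrary: p rule: nat_induct_at_least)
  case base
  then have "length p = 2*N-2" by simp
  then show ?case using base(2) by (rule base_case)
next
  case (Suc k)
  show ?case using step[OF Suc(1) Suc(3) Suc(4)] Suc(2) Suc(4) by blast
qed
end

theorem lemma1:
  fixes V :: "'a set" and E :: "'a \<Rightarrow> 'a \<Rightarrow> bool" and f :: "gv \<Rightarrow> 'a" and n :: nat
  assumes "n \<ge> 1"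
    and "simple_graph V E"
    and "inj_on f (Ghat_verts n)"
    and "f ` Ghat_verts n \<subseteq> V"
    and "\<forall>u\<in>Ghat_verts n. \<forall>v\<in>Ghat_verts n. E (f u) (f v) \<longleftrightarrow> Ghat_edge n u v"
    and "\<forall>u\<in>G_verts n. \<forall>w\<in>V - f ` G_verts n. E (f u) w \<longrightarrow> u = root \<and> w = f Yv"
    and "zero_forcing_set V E P"
  shows "t n \<le> card (f ` G_verts n \<inter> P)
    \<and> (card (f ` G_verts n \<inter> P) = t n \<longrightarrow>
         f root \<notin> P \<and>
         (\<forall>xs. zf_process V E P xs \<longrightarrow>
            (\<forall>(v, u) \<in> set xs. u = f root \<longrightarrow> v \<notin> f ` G_verts n)))"
proof -
  interpret zfl V E f n P using assms(1-6) by unfold_locales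
  obtain xs0 where xs0: "zf_process V E P xs0" using assms(7) unfolding zero_forcing_set_def by blast
  have c: "claim n [] xs" if "zf_process V E P xs" for xs using main[OF assms(1) _ that] by simp
  show ?thesis
    using c[OF xs0] c unfolding claim_def sub_nil root_def by blast
qed

end
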